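(* For each $\mathcal{H} \in \mathbb{R}_D^{[2,2]}$ whose Hermitian flattening matrix has the form \[ \mathfrak{m}(\mathcal{H}) = \begin{pmatrix} A & C \\ C & B \end{pmatrix}, \quad A, B, C \in \mathcal{S}^2, \] there exist invertible matrices $P,Q\in \mathbb{R}^{2\times 2}$ such that $\tilde{\mathcal{H}}:=(P,Q)\times_{cong} \mathcal{H}$ has the flattening \[ \mathfrak{m}(\tilde{\mathcal{H}}) = \begin{pmatrix} sI_2 & D \\ D & s\tilde{B} \end{pmatrix} - s \begin{pmatrix} uu^T & 0 \\ 0 & 0 \end{pmatrix}, \] where $s\in \{0,1,-1\}$, $D$ is a real diagonal matrix, $u\in \mathbb{R}^{2}$ and $\tilde{B} \in \mathcal{S}^2$. In particular, $u=0$ if one of $A,B$ is positive (or negative) definite, and $s=0$ if $A=B=0$.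
   Context: For vectors $v_1,v_2\in\mathbb{C}^2$, $[v_1,v_2]_{\otimes_h} := v_1\otimes v_2\otimes \overline{v_1}\otimes\overline{v_2}$. A real Hermitian tensor $\mathcal{H}\in\mathbb{R}^{2\times2\times2\times2}$ (i.e., $\mathcal{H}_{i_1i_2j_1j_2}=\mathcal{H}_{j_1j_2i_1i_2}$, all entries real) is called $\mathbb{R}$-Hermitian decomposable if $\mathcal{H}=\sum_{i=1}^r \lambda_i [u_i^1,u_i^2]_{\otimes_h}$ with real vectors $u_i^j\in\mathbb{R}^2$ and real scalars $\lambda_i$; $\mathbb{R}_D^{[2,2]}$ denotes the subspace of such tensors. $\mathcal{S}^2$ is the set of $2\times 2$ real symmetric matrices, and $I_2$ the $2\times2$ identity. The Hermitian flattening $\mathfrak{m}$ is the linear map sending $[v_1,v_2]_{\otimes_h}$ to the Kronecker product $(v_1v_1^* )\boxtimes(v_2v_2^* )$; equivalently $\mathfrak{m}(\mathcal{H})$ is the $4\times 4$ matrix with entries $(\mathfrak{m}(\mathcal{H}))_{(i_1,i_2),(j_1,j_2)} = \mathcal{H}_{i_1 i_2 j_1 j_2}$ (rows/columns indexed lexicographically). For square matrices $Q_1,Q_2$, the multilinear congruent transformation is $(Q_1,Q_2)\times_{cong}\mathcal{H} := (Q_1,Q_2,\overline{Q_1},\overline{Q_2})\times \mathcal{H}$, where $(M_1,\dots,M_4)\times$ is the multilinear matrix-tensor product, linear and satisfying $(M_1,\dots,M_4)\times(w_1\otimes\cdots\otimes w_4) = (M_1w_1)\otimes\cdots\otimes(M_4w_4)$.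 *)

theory Defs
  imports "HOL-Analysis.Analysis" "HOL-Library.Numeral_Type"
begin

text \<open>Real 2x2x2x2 tensors; indices range over the two-element type 2 (elements 0 < 1,
  0 being the first index in the lexicographic order).\<close>
type_synonym tensor4 = "2 \<Rightarrow> 2 \<Rightarrow> 2 \<Rightarrow> 2 \<Rightarrow> real"

definition real_hermitian :: "tensor4 \<Rightarrow> bool" where
  "real_hermitian H \<longleftrightarrow> (\<forall>i1 i2 j1 j2. H i1 i2 j1 j2 = H j1 j2 i1 i2)"

text \<open>[v1,v2]_h = v1 (x) v2 (x) conj v1 (x) conj v2, for real vectors.\<close>
definition herm_rank1 :: "real^2 \<Rightarrow> real^2 \<Rightarrow> tensor4" where
  "herm_rank1 v1 v2 = (\<lambda>i1 i2 j1 j2. v1$i1 * v2$i2 * v1$j1 * v2$j2)"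

definition R_herm_decomposable :: "tensor4 \<Rightarrow> bool" where
  "R_herm_decomposable H \<longleftrightarrow> real_hermitian H \<and>
     (\<exists>(r::nat) (lam::nat \<Rightarrow> real) (u1::nat \<Rightarrow> real^2) (u2::nat \<Rightarrow> real^2).
        H = (\<lambda>i1 i2 j1 j2. \<Sum>i<r. lam i * herm_rank1 (u1 i) (u2 i) i1 i2 j1 j2))"

definition herm_flat :: "tensor4 \<Rightarrow> real^(2\<times>2)^(2\<times>2)" where
  "herm_flat H = (\<chi> p q. H (fst p) (snd p) (fst q) (snd q))"

definition block2 :: "real^2^2 \<Rightarrow> real^2^2 \<Rightarrow> real^2^2 \<Rightarrow> real^2^2 \<Rightarrow> real^(2\<times>2)^(2\<times>2)" where
  "block2 M11 M12 M21 M22 = (\<chi> p q.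
     (if fst p = 0 then (if fst q = 0 then M11 else M12)
      else (if fst q = 0 then M21 else M22)) $ snd p $ snd q)"

text \<open>Multilinear congruent transformation (P,Q) x_cong H = (P,Q,conj P,conj Q) x H, P,Q real.\<close>
definition cong_transf :: "real^2^2 \<Rightarrow> real^2^2 \<Rightarrow> tensor4 \<Rightarrow> tensor4" where
  "cong_transf P Q H = (\<lambda>a b c d. \<Sum>i\<in>UNIV. \<Sum>j\<in>UNIV. \<Sum>k\<in>UNIV. \<Sum>l\<in>UNIV.
      P$a$i * Q$b$j * P$c$k * Q$d$l * H i j k l)"

definition symmetric_mat :: "real^'n^'n \<Rightarrow> bool" where
  "symmetric_mat A \<longleftrightarrow> transpose A = A"

definition diagonal_mat :: "real^'n^'n \<Rightarrow> bool" where
  "diagonal_mat A \<longleftrightarrow> (\<forall>i j. i \<noteq> j \<longrightarrow> A$i$j = 0)"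

definition pos_def :: "real^'n^'n \<Rightarrow> bool" where
  "pos_def A \<longleftrightarrow> symmetric_mat A \<and> (\<forall>x. x \<noteq> 0 \<longrightarrow> x \<bullet> (A *v x) > 0)"

definition neg_def :: "real^'n^'n \<Rightarrow> bool" where
  "neg_def A \<longleftrightarrow> symmetric_mat A \<and> (\<forall>x. x \<noteq> 0 \<longrightarrow> x \<bullet> (A *v x) < 0)"

definition outer :: "real^'n \<Rightarrow> real^'n^'n" where
  "outer u = (\<chi> i j. u$i * u$j)"

end

theory Submission imports Defs begin

definition M2 :: "real \<Rightarrow> real \<Rightarrow> real \<Rightarrow> real \<Rightarrow> real^2^2" where
  "M2 a b c d = (\<chi> i j. if i = 1 then (if j = 1 then a else b) else (if j = 1 then c else d))"

lemma M2_nth[simp]: "M2 a b c d $ 1 $ 1 = a" "M2 a b c d $ 1 $ 2 = b"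
  "M2 a b c d $ 2 $ 1 = c" "M2 a b c d $ 2 $ 2 = d"
  by (simp_all add: M2_def)

lemma M2_eta: "A = M2 (A$1$1) (A$1$2) (A$2$1) (A$2$2)"
  by (simp add: vec_eq_iff forall_2)

lemma M2_eq_iff: "M2 a b c d = M2 a' b' c' d' \<longleftrightarrow> a = a' \<and> b = b' \<and> c = c' \<and> d = d'"
  by (auto simp add: vec_eq_iff forall_2)

lemma M2_mult: "M2 a b c d ** M2 e f g h = M2 (a*e + b*g) (a*f + b*h) (c*e + d*g) (c*f + d*h)"
  by (simp add: vec_eq_iff forall_2 matrix_matrix_mult_def sum_2)

lemma M2_transpose: "transpose (M2 a b c d) = M2 a c b d"
  by (simp add: vec_eq_iff forall_2 transpose_def)

lemma M2_mat: "mat x = M2 x 0 0 x"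
  by (simp add: vec_eq_iff forall_2 mat_def)

lemma M2_zero: "0 = M2 0 0 0 0"
  by (simp add: vec_eq_iff forall_2)

lemma M2_scale: "r *\<^sub>R M2 a b c d = M2 (r*a) (r*b) (r*c) (r*d)"
  by (simp add: vec_eq_iff forall_2)

lemma M2_diff: "M2 a b c d - M2 a' b' c' d' = M2 (a-a') (b-b') (c-c') (d-d')"
  by (simp add: vec_eq_iff forall_2)

lemma M2_det: "det (M2 a b c d) = a*d - b*c"
  by (simp add: det_2)

lemma M2_sym: "symmetric_mat (M2 a b c d) \<longleftrightarrow> b = c"
  by (auto simp add: symmetric_mat_def M2_transpose M2_eq_iff)

lemma M2_diag: "diagonal_mat (M2 a b c d) \<longleftrightarrow> b = 0 \<and> c = 0"
  unfolding diagonal_mat_def by (metis M2_nth exhaust_2 one_neq_zero num1_eq_iff M2_def)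

definition vec2 :: "real \<Rightarrow> real \<Rightarrow> real^2" where "vec2 x y = (\<chi> i. if i = 1 then x else y)"

lemma vec2_nth[simp]: "vec2 x y $ 1 = x" "vec2 x y $ 2 = y" by (simp_all add: vec2_def)

lemma outer_vec2: "outer (vec2 x y) = M2 (x*x) (x*y) (y*x) (y*y)"
  by (simp add: vec_eq_iff forall_2 outer_def)

lemma M2_quad: "vec2 x y \<bullet> (M2 a b c d *v vec2 x y) = x*(a*x+b*y) + y*(c*x+d*y)"
  by (simp add: inner_vec_def sum_2 matrix_vector_mult_def)

lemma vec2_eta: "v = vec2 (v$1) (v$2)" by (simp add: vec_eq_iff forall_2)
lemma vec2_zero: "vec2 x y = 0 \<longleftrightarrow> x = 0 \<and> y = 0" by (auto simp: vec_eq_iff forall_2)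

definition cg :: "real^2^2 \<Rightarrow> real^2^2 \<Rightarrow> real^2^2" where
  "cg Q M = Q ** M ** transpose Q"

lemma cg_M2: "cg (M2 p q r t) (M2 a b c d) =
  M2 ((p*a+q*c)*p + (p*b+q*d)*q) ((p*a+q*c)*r + (p*b+q*d)*t)
     ((r*a+t*c)*p + (r*b+t*d)*q) ((r*a+t*c)*r + (r*b+t*d)*t)"
  by (simp add: cg_def M2_mult M2_transpose)

lemma cg_comp: "cg (Q ** R) M = cg Q (cg R M)"
  by (simp add: cg_def matrix_transpose_mul matrix_mul_assoc)

lemma sym_M2E: assumes "symmetric_mat S" obtains a b c where "S = M2 a b b c"
  using assms M2_eta[of S] M2_sym by metis

lemma L_orth: assumes "symmetric_mat S"
  shows "\<exists>U. U ** transpose U = mat 1 \<and> diagonal_mat (cg U S)"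
proof -
  obtain a b c where S: "S = M2 a b b c" using assms sym_M2E by blast
  show ?thesis
  proof (cases "b = 0")
    case True
    then show ?thesis
      by (intro exI[of _ "mat 1"]) (simp add: S M2_mat M2_mult M2_transpose cg_M2 M2_diag)
  next
    case False
    define r where "r = sqrt (((a-c)/2)^2 + b^2)"
    define l where "l = (c-a)/2 + r"
    have r2: "r^2 = ((a-c)/2)^2 + b^2" unfolding r_def by simp
    have "l*(l + a - c) = r^2 - ((a-c)/2)^2" unfolding l_def by (simp add: field_simps power2_eq_square)
    then have key: "l*(l + a - c) = b^2" using r2 by simp
    define n where "n = sqrt (b^2 + l^2)"
    have npos: "n > 0" unfolding n_def using False by (simp add: add_pos_nonneg)
    have n2: "n*n = b^2 + l^2" unfolding n_def by (simp add: add_nonneg_nonneg flip: power2_eq_square)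
    show ?thesis
    proof (intro exI[of _ "M2 (b/n) (l/n) (-l/n) (b/n)"] conjI)
      show "M2 (b/n) (l/n) (-l/n) (b/n) ** transpose (M2 (b/n) (l/n) (-l/n) (b/n)) = mat 1"
      proof -
        have "(b/n)*(b/n) + (l/n)*(l/n) = (b*b+l*l)/(n*n)" by (simp add: add_divide_distrib)
        also have "\<dots> = 1" using n2 npos False by (simp add: power2_eq_square)
        finally have e1: "(b/n)*(b/n) + (l/n)*(l/n) = 1" .
        show ?thesis by (simp add: M2_mat M2_mult M2_transpose M2_eq_iff) (use e1 in \<open>simp add: algebra_simps\<close>)
      qed
      have "b * (b * b - l * l - a * l + c * l) = 0"
        using key by (simp add: algebra_simps power2_eq_square)
      then show "diagonal_mat (cg (M2 (b/n) (l/n) (-l/n) (b/n)) S)"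
        using npos unfolding S cg_M2 M2_diag
        by (simp add: field_simps) algebra
    qed
  qed
qed

lemma orth_inv: fixes U :: "real^2^2" assumes "U ** transpose U = mat 1" shows "invertible U"
proof -
  have "det U * det U = 1" using arg_cong[OF assms, of det] by (simp add: det_mul det_transpose)
  then show ?thesis by (auto simp: invertible_det_nz)
qed

lemma cg_orth_scal: assumes "U ** transpose U = mat 1" shows "cg U (s *\<^sub>R mat 1) = s *\<^sub>R mat 1"
  using assms by (simp add: cg_def matrix_scalar_ac scalar_matrix_assoc[symmetric] matrix_mul_rid)

lemma cg_scale: "cg Q (r *\<^sub>R M) = r *\<^sub>R cg Q M"
  by (simp add: cg_def matrix_scalar_ac scalar_matrix_assoc)

lemma cg_zero_imp: assumes "invertible Q" "cg Q M = 0" shows "M = 0"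
proof -
  obtain Q' where Q': "Q' ** Q = mat 1" "Q ** Q' = mat 1" using assms(1) invertible_def by blast
  have t: "transpose Q ** transpose Q' = mat 1" by (metis Q'(1) matrix_transpose_mul transpose_mat)
  have "Q' ** (Q ** M ** transpose Q) ** transpose Q' = (Q' ** Q) ** M ** (transpose Q ** transpose Q')"
    by (simp add: matrix_mul_assoc)
  also have "\<dots> = M" using Q'(1) t by (simp add: matrix_mul_lid matrix_mul_rid)
  finally have "M = Q' ** (Q ** M ** transpose Q) ** transpose Q'" by simp
  then show ?thesis using assms(2) by (simp add: cg_def)
qed

lemma L_defpos: assumes "a > 0" "a*c - b*b > 0"
  shows "\<exists>Q. invertible Q \<and> cg Q (M2 a b b c) = mat 1"
proof -
  define d where "d = (a*c - b*b)/a"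
  have dpos: "d > 0" using assms unfolding d_def by simp
  obtain ra where ra: "ra > 0" "ra * ra = a" using assms(1) by (intro that[of "sqrt a"]) auto
  obtain rd where rd: "rd > 0" "rd * rd = d" using dpos by (intro that[of "sqrt d"]) auto
  have cd: "c = d + b*b/a" unfolding d_def using assms by (simp add: field_simps)
  show ?thesis
  proof (intro exI[of _ "M2 (1/ra) 0 (-b/(a*rd)) (1/rd)"] conjI)
    show "invertible (M2 (1/ra) 0 (-b/(a*rd)) (1/rd))"
      using ra rd by (simp add: invertible_det_nz M2_det)
    show "cg (M2 (1/ra) 0 (-b/(a*rd)) (1/rd)) (M2 a b b c) = mat 1"
      unfolding cg_M2 M2_mat M2_eq_iff using ra rd assms(1) cd dpos
      by (simp add: field_simps)
  qed
qed

lemma posdef_M2: assumes "pos_def (M2 a b b c)" shows "a > 0" "a*c - b*b > 0"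
proof -
  have q: "\<And>x y. vec2 x y \<noteq> 0 \<Longrightarrow> x*(a*x+b*y) + y*(b*x+c*y) > 0"
    using assms unfolding pos_def_def by (metis M2_quad)
  show "a > 0" using q[of 1 0] by (simp add: vec2_zero)
  then have "b*(a*b+b*(-a)) + (-a)*(b*b+c*(-a)) > 0" using q[of b "-a"] by (simp add: vec2_zero)
  then have "a*(a*c - b*b) > 0" by (simp add: algebra_simps)
  then show "a*c - b*b > 0" using \<open>a > 0\<close> by (simp add: zero_less_mult_iff)
qed

lemma negdef_M2: assumes "neg_def (M2 a b b c)" shows "-a > 0" "(-a)*(-c) - (-b)*(-b) > 0"
proof -
  have q: "\<And>x y. vec2 x y \<noteq> 0 \<Longrightarrow> x*(a*x+b*y) + y*(b*x+c*y) < 0"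
    using assms unfolding neg_def_def by (metis M2_quad)
  show "-a > 0" using q[of 1 0] by (simp add: vec2_zero)
  then have "b*(a*b+b*(-a)) + (-a)*(b*b+c*(-a)) < 0" using q[of b "-a"] by (simp add: vec2_zero)
  then have "(-a)*(a*c - b*b) > 0" by (simp add: algebra_simps)
  then have "a*c - b*b > 0" using \<open>-a > 0\<close> zero_less_mult_pos by blast
  then show "(-a)*(-c) - (-b)*(-b) > 0" by simp
qed

lemma sym_cg: assumes "symmetric_mat M" shows "symmetric_mat (cg Q M)"
  using assms by (simp add: symmetric_mat_def cg_def matrix_transpose_mul matrix_mul_assoc)

lemma L_def: assumes "symmetric_mat A" "pos_def A \<or> neg_def A" "symmetric_mat C"
  shows "\<exists>Q s. invertible Q \<and> (s = 1 \<or> s = -1) \<and> cg Q A = s *\<^sub>R mat 1 \<and> diagonal_mat (cg Q C)"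
proof -
  obtain a b c where A: "A = M2 a b b c" using assms(1) sym_M2E by blast
  have "\<exists>Q1 s. invertible Q1 \<and> (s = 1 \<or> s = -1) \<and> cg Q1 A = s *\<^sub>R mat 1"
  proof (cases "pos_def A")
    case True
    then obtain Q1 where "invertible Q1" "cg Q1 A = mat 1" using L_defpos posdef_M2 A by metis
    then show ?thesis by (intro exI[of _ Q1] exI[of _ 1]) simp
  next
    case False
    then have "neg_def A" using assms(2) by simp
    then obtain Q1 where Q1: "invertible Q1" "cg Q1 (M2 (-a) (-b) (-b) (-c)) = mat 1"
      using L_defpos negdef_M2 A by metis
    have "M2 (-a) (-b) (-b) (-c) = (-1) *\<^sub>R A" by (simp add: A M2_scale)
    then have "cg Q1 A = (-1) *\<^sub>R mat 1" using Q1(2) cg_scale[of Q1 "-1" A] by simp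
    then show ?thesis using Q1(1) by (intro exI[of _ Q1] exI[of _ "-1"]) simp
  qed
  then obtain Q1 s where Q1: "invertible Q1" "s = 1 \<or> s = -1" "cg Q1 A = s *\<^sub>R mat 1" by blast
  obtain U where U: "U ** transpose U = mat 1" "diagonal_mat (cg U (cg Q1 C))"
    using L_orth sym_cg assms(3) by blast
  show ?thesis
  proof (intro exI[of _ "U ** Q1"] exI[of _ s] conjI)
    show "invertible (U ** Q1)" using orth_inv[OF U(1)] Q1(1) invertible_mult by blast
    show "s = 1 \<or> s = -1" by fact
    show "cg (U ** Q1) A = s *\<^sub>R mat 1" using U(1) Q1(3) by (simp add: cg_comp cg_orth_scal)
    show "diagonal_mat (cg (U ** Q1) C)" using U(2) by (simp add: cg_comp)
  qed
qed

lemma L_scale: fixes a b c :: real assumes "a \<noteq> 0 \<or> b \<noteq> 0"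
  shows "\<exists>d1 d2 s u1 u2. d1 \<noteq> 0 \<and> d2 \<noteq> 0 \<and> (s = 1 \<or> s = -1) \<and> a*d1*d1 = s * (1 - u1*u1)
     \<and> b*d1*d2 = -s * (u1*u2) \<and> c*d2*d2 = s * (1 - u2*u2)"
proof -
  define y where "y = 1/(1 + \<bar>c\<bar>)"
  have ypos: "y > 0" unfolding y_def by (simp add: add_pos_nonneg)
  have cy: "\<bar>c*y\<bar> < 1" unfolding y_def by (simp add: abs_mult field_simps)
  obtain d2 where d2: "d2 > 0" "d2 * d2 = y" using ypos by (intro that[of "sqrt y"]) auto
  show ?thesis
  proof (cases "b = 0")
    case True
    then have a0: "a \<noteq> 0" using assms by simp
    define s where "s = (if a > 0 then 1 else -1::real)"
    have s1: "s * s = 1" "s = 1 \<or> s = -1" unfolding s_def by auto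
    have sa: "s * a = \<bar>a\<bar>" unfolding s_def using a0 by auto
    have k: "1 - s * c*y \<ge> 0" using cy s1(2) by (auto simp: abs_less_iff)
    obtain d1 where d1: "d1 > 0" "d1 * d1 = 1/\<bar>a\<bar>" using a0 by (intro that[of "sqrt (1/\<bar>a\<bar>)"]) auto
    obtain u2 where u2: "u2 * u2 = 1 - s * c*y" using k by (intro that[of "sqrt (1 - s * c*y)"]) (auto simp flip: power2_eq_square)
    have e1: "a*d1*d1 = a/\<bar>a\<bar>" using d1 by (simp add: mult.assoc)
    have e2: "a/\<bar>a\<bar> = s" unfolding s_def using a0 by auto
    have e3: "c*d2*d2 = c*y" using d2 by (simp add: mult.assoc)
    have "s * (1 - u2*u2) = s * (s * c * y)" using u2 by simp
    also have "\<dots> = (s * s)*c*y" by (simp add: algebra_simps)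
    also have "\<dots> = c*y" using s1 by simp
    finally have e4: "s * (1 - u2*u2) = c*y" .
    show ?thesis
    proof (rule exI[of _ d1], rule exI[of _ d2], rule exI[of _ s], rule exI[of _ "0::real"], rule exI[of _ u2], intro conjI)
      show "a*d1*d1 = s * (1 - 0*0)" using e1 e2 by simp
      show "c*d2*d2 = s * (1 - u2*u2)" using e3 e4 by simp
    qed (use d1 d2 s1 True in auto)
  next
    case False
    define s where "s = (if a \<ge> 0 then 1 else -1::real)"
    have s1: "s * s = 1" "s = 1 \<or> s = -1" unfolding s_def by auto
    have sa: "s * a \<ge> 0" unfolding s_def by auto
    define k where "k = 1 - s * c*y"
    have kpos: "k > 0" unfolding k_def using cy s1(2) by (auto simp: abs_less_iff)
    define den where "den = s * a*k + b*b*y"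
    have bb: "b * b > 0" using False by (auto simp: zero_less_mult_iff)
    have "s * a * k \<ge> 0" using sa kpos by simp
    moreover have "b * b * y > 0" using bb ypos by simp
    ultimately have denpos: "den > 0" unfolding den_def by linarith
    define x where "x = k / den"
    have xpos: "x > 0" unfolding x_def using kpos denpos by simp
    have "1 - s * a*x = (den - s * a*k)/den" unfolding x_def using denpos by (simp add: field_simps)
    also have "\<dots> = b*b*y/den" unfolding den_def by simp
    also have "\<dots> = b*b*x*y/k" unfolding x_def using kpos denpos by (simp add: field_simps)
    finally have ex: "1 - s * a*x = b*b*x*y/k" .
    have expos: "1 - s * a*x > 0" using ex bb xpos ypos kpos by simp
    obtain d1 where d1: "d1 > 0" "d1 * d1 = x" using xpos by (intro that[of "sqrt x"]) auto
    obtain u1 where u1: "u1 > 0" "u1 * u1 = 1 - s * a*x" using expos by (intro that[of "sqrt (1 - s * a*x)"]) auto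
    define u2 where "u2 = -s * b*d1*d2/u1"
    show ?thesis
    proof (rule exI[of _ d1], rule exI[of _ d2], rule exI[of _ s], rule exI[of _ u1], rule exI[of _ u2], intro conjI)
      have "s * (1 - u1*u1) = s * (s * a * x)" using u1 by simp
      also have "\<dots> = (s * s)*a*x" by (simp add: algebra_simps)
      also have "\<dots> = a*d1*d1" using s1 d1 by (simp add: mult.assoc)
      finally show "a*d1*d1 = s * (1 - u1*u1)" by simp
      show "b*d1*d2 = -s * (u1*u2)" unfolding u2_def using u1 s1 by (simp add: field_simps)
      have "u2 * u2 = (s * s)*b*b*(d1*d1)*(d2*d2)/(u1*u1)" unfolding u2_def using u1
        by (simp add: field_simps)
      also have "\<dots> = b*b*x*y/(u1*u1)" using s1 d1 d2 by simp
      also have "\<dots> = b*b*x*y/(b*b*x*y/k)" using u1(2) ex by simp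
      also have "\<dots> = k" using False kpos xpos ypos by simp
      finally have "u2 * u2 = k" .
      then have "s * (1 - u2*u2) = s * (s * c * y)" unfolding k_def by simp
      also have "\<dots> = (s * s)*c*y" by (simp add: algebra_simps)
      also have "\<dots> = c*d2*d2" using s1 d2 by (simp add: mult.assoc)
      finally show "c*d2*d2 = s * (1 - u2*u2)" by simp
    qed (use d1 d2 s1 in auto)
  qed
qed

lemma diag_M2E: assumes "diagonal_mat D" obtains e f where "D = M2 e 0 0 f"
  using assms M2_eta[of D] M2_diag by metis

lemma L_gen: assumes "symmetric_mat A" "A \<noteq> 0" "symmetric_mat C"
  shows "\<exists>Q s u. invertible Q \<and> (s = 1 \<or> s = -1) \<and> cg Q A = s *\<^sub>R (mat 1 - outer u)
     \<and> diagonal_mat (cg Q C)"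
proof -
  obtain U where U: "U ** transpose U = mat 1" "diagonal_mat (cg U C)"
    using L_orth assms(3) by blast
  have Ui: "invertible U" using orth_inv U(1) by blast
  have "cg U A \<noteq> 0" using cg_zero_imp[OF Ui] assms(2) by blast
  moreover obtain a b c where A2: "cg U A = M2 a b b c" using sym_cg assms(1) sym_M2E by metis
  ultimately have nz: "a \<noteq> 0 \<or> b \<noteq> 0 \<or> c \<noteq> 0" by (auto simp: M2_zero)
  obtain e f where C2: "cg U C = M2 e 0 0 f" using U(2) diag_M2E by blast
  have "\<exists>V a' b' c' e' f'. invertible V \<and> cg V (M2 a b b c) = M2 a' b' b' c' \<and> (a' \<noteq> 0 \<or> b' \<noteq> 0)
      \<and> cg V (M2 e 0 0 f) = M2 e' 0 0 f'"
  proof (cases "a \<noteq> 0 \<or> b \<noteq> 0")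
    case True
    show ?thesis
      by (rule exI[of _ "mat 1"], rule exI[of _ a], rule exI[of _ b], rule exI[of _ c], rule exI[of _ e], rule exI[of _ f])
        (use True in \<open>simp add: M2_mat cg_M2 invertible_det_nz M2_det\<close>)
  next
    case False
    then have cc: "c \<noteq> 0" "a = 0" "b = 0" using nz by auto
    show ?thesis
      by (rule exI[of _ "M2 0 1 1 0"], rule exI[of _ c], rule exI[of _ 0], rule exI[of _ 0], rule exI[of _ f], rule exI[of _ e])
        (use cc in \<open>simp add: cg_M2 invertible_det_nz M2_det\<close>)
  qed
  then obtain V a' b' c' e' f' where V: "invertible V" "cg V (M2 a b b c) = M2 a' b' b' c'"
     "a' \<noteq> 0 \<or> b' \<noteq> 0" "cg V (M2 e 0 0 f) = M2 e' 0 0 f'" by blast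
  obtain d1 d2 s u1 u2 where sc: "d1 \<noteq> 0" "d2 \<noteq> 0" "s = 1 \<or> s = -1" "a'*d1*d1 = s * (1 - u1*u1)"
     "b'*d1*d2 = -s * (u1*u2)" "c'*d2*d2 = s * (1 - u2*u2)"
    using L_scale[OF V(3), of c'] by blast
  show ?thesis
  proof (intro exI[of _ "M2 d1 0 0 d2 ** V ** U"] exI[of _ s] exI[of _ "vec2 u1 u2"] conjI)
    show "invertible (M2 d1 0 0 d2 ** V ** U)"
      using sc(1,2) V(1) Ui by (intro invertible_mult) (auto simp: invertible_det_nz M2_det)
    show "s = 1 \<or> s = -1" by fact
    have "cg (M2 d1 0 0 d2 ** V ** U) A = cg (M2 d1 0 0 d2) (M2 a' b' b' c')"
      by (simp add: cg_comp A2 V(2))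
    also have "\<dots> = s *\<^sub>R (mat 1 - outer (vec2 u1 u2))"
      unfolding cg_M2 outer_vec2 M2_mat M2_diff M2_scale M2_eq_iff using sc(4-6)
      by (simp add: algebra_simps)
    finally show "cg (M2 d1 0 0 d2 ** V ** U) A = s *\<^sub>R (mat 1 - outer (vec2 u1 u2))" .
    show "diagonal_mat (cg (M2 d1 0 0 d2 ** V ** U) C)"
      by (simp add: cg_comp C2 V(4) cg_M2 M2_diag)
  qed
qed

lemma M2_nth0: "M2 a b c d $ 0 $ 1 = c" "M2 a b c d $ 0 $ 0 = d" "M2 a b c d $ 1 $ 0 = b"
   "M2 a b c d $ 0 $ 2 = d" "M2 a b c d $ 2 $ 0 = d"
  by (simp_all add: M2_def)

lemma flat_cong:
  assumes "herm_flat H = block2 A C C B"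
  shows "herm_flat (cong_transf (mat 1) Q H) = block2 (cg Q A) (cg Q C) (cg Q C) (cg Q B)"
    and "herm_flat (cong_transf (M2 0 1 1 0) Q H) = block2 (cg Q B) (cg Q C) (cg Q C) (cg Q A)"
proof -
  have Hx: "H i1 i2 j1 j2 = block2 A C C B $ (i1,i2) $ (j1,j2)" for i1 i2 j1 j2
    using arg_cong[OF assms, of "\<lambda>M. M $ (i1,i2) $ (j1,j2)"] by (simp add: herm_flat_def)
  show "herm_flat (cong_transf (mat 1) Q H) = block2 (cg Q A) (cg Q C) (cg Q C) (cg Q B)"
  proof (subst vec_eq_iff, intro allI, subst vec_eq_iff, intro allI)
    fix p q :: "2 \<times> 2"
    obtain a b where p: "p = (a,b)" by fastforce
    obtain c d where q: "q = (c,d)" by fastforce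
    show "herm_flat (cong_transf (mat 1) Q H) $ p $ q = block2 (cg Q A) (cg Q C) (cg Q C) (cg Q B) $ p $ q"
      unfolding p q using exhaust_2[of a] exhaust_2[of c]
      by (auto simp: herm_flat_def cong_transf_def block2_def Hx sum_2 mat_def cg_def
          matrix_matrix_mult_def transpose_def algebra_simps)
  qed
  show "herm_flat (cong_transf (M2 0 1 1 0) Q H) = block2 (cg Q B) (cg Q C) (cg Q C) (cg Q A)"
  proof (subst vec_eq_iff, intro allI, subst vec_eq_iff, intro allI)
    fix p q :: "2 \<times> 2"
    obtain a b where p: "p = (a,b)" by fastforce
    obtain c d where q: "q = (c,d)" by fastforce
    show "herm_flat (cong_transf (M2 0 1 1 0) Q H) $ p $ q = block2 (cg Q B) (cg Q C) (cg Q C) (cg Q A) $ p $ q"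
      unfolding p q using exhaust_2[of a] exhaust_2[of c]
      by (auto simp: herm_flat_def cong_transf_def block2_def Hx sum_2 cg_def M2_nth0
          matrix_matrix_mult_def transpose_def algebra_simps)
  qed
qed

lemma rhs_eq: "block2 (s *\<^sub>R mat 1) D D (s *\<^sub>R Bt) - s *\<^sub>R block2 (outer u) 0 0 0
   = block2 (s *\<^sub>R (mat 1 - outer u)) D D (s *\<^sub>R Bt)"
  by (simp add: vec_eq_iff block2_def algebra_simps)

lemma finish:
  assumes "herm_flat (cong_transf P Q H) = block2 X D D Y" "s = 1 \<or> s = -1"
    "X = s *\<^sub>R (mat 1 - outer u)" "symmetric_mat Y"
  shows "\<exists>Bt. symmetric_mat Bt \<and> herm_flat (cong_transf P Q H)
             = block2 (s *\<^sub>R mat 1) D D (s *\<^sub>R Bt) - s *\<^sub>R block2 (outer u) 0 0 0"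
proof (intro exI[of _ "(1/s) *\<^sub>R Y"] conjI)
  show "symmetric_mat ((1/s) *\<^sub>R Y)" using assms(4) by (simp add: symmetric_mat_def transpose_scalar)
  have "s *\<^sub>R ((1/s) *\<^sub>R Y) = Y" using assms(2) by auto
  then show "herm_flat (cong_transf P Q H)
             = block2 (s *\<^sub>R mat 1) D D (s *\<^sub>R ((1/s) *\<^sub>R Y)) - s *\<^sub>R block2 (outer u) 0 0 0"
    unfolding rhs_eq using assms(1,3) by simp
qed

lemma outer0: "outer (0::real^2) = 0" by (simp add: outer_def vec_eq_iff)

theorem proposition4p2:
  fixes H :: tensor4 and A B C :: "real^2^2"
  assumes "R_herm_decomposable H"
    and "herm_flat H = block2 A C C B"
    and "symmetric_mat A" and "symmetric_mat B" and "symmetric_mat C"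
  shows "\<exists>(P::real^2^2) (Q::real^2^2) (s::real) (D::real^2^2) (u::real^2) (Bt::real^2^2).
           invertible P \<and> invertible Q \<and> s \<in> {0, 1, -1} \<and> diagonal_mat D \<and> symmetric_mat Bt \<and>
           herm_flat (cong_transf P Q H)
             = block2 (s *\<^sub>R mat 1) D D (s *\<^sub>R Bt) - s *\<^sub>R block2 (outer u) 0 0 0 \<and>
           ((pos_def A \<or> neg_def A \<or> pos_def B \<or> neg_def B) \<longrightarrow> u = 0) \<and>
           (A = 0 \<and> B = 0 \<longrightarrow> s = 0)"
proof -
  note fc = flat_cong[OF assms(2)]
  have I1: "invertible (mat 1 :: real^2^2)" by (simp add: invertible_det_nz M2_mat M2_det)
  have Sw: "invertible (M2 0 1 1 0)" by (simp add: invertible_det_nz M2_det)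
  show ?thesis
  proof (cases "A = 0 \<and> B = 0")
    case True
    obtain U where U: "U ** transpose U = mat 1" "diagonal_mat (cg U C)" using L_orth assms(5) by blast
    have "herm_flat (cong_transf (mat 1) U H) = block2 (0 *\<^sub>R mat 1) (cg U C) (cg U C) (0 *\<^sub>R 0)
       - 0 *\<^sub>R block2 (outer 0) 0 0 0"
      using fc(1)[of U] True by (simp add: cg_def)
    then show ?thesis using I1 orth_inv[OF U(1)] U(2)
      by (intro exI[of _ "mat 1"] exI[of _ U] exI[of _ 0] exI[of _ "cg U C"] exI[of _ "0::real^2"] exI[of _ "0::real^2^2"])
        (simp add: symmetric_mat_def)
  next
    case nAB: False
    show ?thesis
    proof (cases "pos_def A \<or> neg_def A")
      case True
      obtain Q s where Q: "invertible Q" "s = 1 \<or> s = -1" "cg Q A = s *\<^sub>R mat 1" "diagonal_mat (cg Q C)"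
        using L_def[OF assms(3) True assms(5)] by blast
      obtain Bt where Bt: "symmetric_mat Bt" "herm_flat (cong_transf (mat 1) Q H)
             = block2 (s *\<^sub>R mat 1) (cg Q C) (cg Q C) (s *\<^sub>R Bt) - s *\<^sub>R block2 (outer 0) 0 0 0"
        using finish[OF fc(1)[of Q] Q(2), of 0] Q(3) sym_cg[OF assms(4)] by (auto simp: outer0)
      show ?thesis using I1 Q Bt nAB
        by (intro exI[of _ "mat 1"] exI[of _ Q] exI[of _ s] exI[of _ "cg Q C"] exI[of _ "0::real^2"] exI[of _ Bt]) auto
    next
      case nA: False
      show ?thesis
      proof (cases "pos_def B \<or> neg_def B")
        case True
        obtain Q s where Q: "invertible Q" "s = 1 \<or> s = -1" "cg Q B = s *\<^sub>R mat 1" "diagonal_mat (cg Q C)"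
          using L_def[OF assms(4) True assms(5)] by blast
        obtain Bt where Bt: "symmetric_mat Bt" "herm_flat (cong_transf (M2 0 1 1 0) Q H)
               = block2 (s *\<^sub>R mat 1) (cg Q C) (cg Q C) (s *\<^sub>R Bt) - s *\<^sub>R block2 (outer 0) 0 0 0"
          using finish[OF fc(2)[of Q] Q(2), of 0] Q(3) sym_cg[OF assms(3)] by (auto simp: outer0)
        show ?thesis using Sw Q Bt nAB
          by (intro exI[of _ "M2 0 1 1 0"] exI[of _ Q] exI[of _ s] exI[of _ "cg Q C"] exI[of _ "0::real^2"] exI[of _ Bt]) auto
      next
        case nB: False
        show ?thesis
        proof (cases "A = 0")
          case False
          obtain Q s u where Q: "invertible Q" "s = 1 \<or> s = -1" "cg Q A = s *\<^sub>R (mat 1 - outer u)"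
            "diagonal_mat (cg Q C)" using L_gen[OF assms(3) False assms(5)] by blast
          obtain Bt where Bt: "symmetric_mat Bt" "herm_flat (cong_transf (mat 1) Q H)
               = block2 (s *\<^sub>R mat 1) (cg Q C) (cg Q C) (s *\<^sub>R Bt) - s *\<^sub>R block2 (outer u) 0 0 0"
            using finish[OF fc(1)[of Q] Q(2) Q(3) sym_cg[OF assms(4)]] by blast
          show ?thesis using I1 Q Bt nAB nA nB
            by (intro exI[of _ "mat 1"] exI[of _ Q] exI[of _ s] exI[of _ "cg Q C"] exI[of _ u] exI[of _ Bt]) auto
        next
          case True
          then have "B \<noteq> 0" using nAB by simp
          obtain Q s u where Q: "invertible Q" "s = 1 \<or> s = -1" "cg Q B = s *\<^sub>R (mat 1 - outer u)"
            "diagonal_mat (cg Q C)" using L_gen[OF assms(4) \<open>B \<noteq> 0\<close> assms(5)] by blast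
          obtain Bt where Bt: "symmetric_mat Bt" "herm_flat (cong_transf (M2 0 1 1 0) Q H)
               = block2 (s *\<^sub>R mat 1) (cg Q C) (cg Q C) (s *\<^sub>R Bt) - s *\<^sub>R block2 (outer u) 0 0 0"
            using finish[OF fc(2)[of Q] Q(2) Q(3) sym_cg[OF assms(3)]] by blast
          show ?thesis using Sw Q Bt nAB nA nB
            by (intro exI[of _ "M2 0 1 1 0"] exI[of _ Q] exI[of _ s] exI[of _ "cg Q C"] exI[of _ u] exI[of _ Bt]) auto
        qed
      qed
    qed
  qed
qed

end
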